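(* Fix $\mathbf{x} \in \Omega$, $\alpha \in [0,1)$ and $i \in \{1,\dots,n\}$, and let $C = \{x_{(i)}\}$. Then $$B_{R_i}^*(\mathbf{x}) = \min\{E[F] : F \in \mathcal{F}_{C^+}(\Omega(\mathbf{x},R_i),\alpha)\}.$$
   Context: Fix integers $m \ge 2$, $n \ge 1$ and reals $S_{\min} < S_{\max}$; $S = \{S_0,\dots,S_{m-1}\}$ with $S_k = S_{\min} + k\frac{S_{\max}-S_{\min}}{m-1}$. $\mathcal{F}$ is the set of probability distributions on $S$, identified with the probability simplex in $\mathbb{R}^m$ with the Euclidean topology; $E[F]$ is the mean. $\Omega$ is the set of samples of size $n$ from $S$, identified with their sorted versions $x_{(1)} \le \dots \le x_{(n)}$. $P_F[\Omega']$ is the probability that the sorted sample of $n$ i.i.d. draws from $F$ lies in $\Omega' \subseteq \Omega$; $\mathcal{G}(\Omega',\alpha) = \{F : P_F[\Omega'] > \alpha\}$ and $\mathcal{F}(\Omega',\alpha)$ is its closure. The $i$th quantile preorder $R_i$ on $\Omega$: $\mathbf{x} \lesssim_{R_i} \mathbf{y}$ iff $x_{(i)} \le y_{(i)}$; $\Omega(\mathbf{x},R_i) = \{\mathbf{y} : x_{(i)} \le y_{(i)}\}$; $B_{R_i}^*(\mathbf{x}) = \min\{E[F] : F \in \mathcal{F}(\Omega(\mathbf{x},R_i),\alpha)\}$. For $C \subseteq S$: $\mathcal{F}_C = \{F \in \mathcal{F} : P_F[X = s] = 0 \ \forall s \in S\setminus C\}$, $\mathcal{G}_C(\Omega',\alpha)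 = \mathcal{F}_C \cap \mathcal{G}(\Omega',\alpha)$, $\mathcal{F}_C(\Omega',\alpha)$ is the closure of $\mathcal{G}_C(\Omega',\alpha)$, and $C^+ = C \cup \{S_{\min}\} \cup \{S_{j+1} : S_j \in C,\ j \le m-2\}$. *)

theory Defs
  imports "HOL-Analysis.Analysis"
begin

definition Spt :: "nat \<Rightarrow> real \<Rightarrow> real \<Rightarrow> nat \<Rightarrow> real" where
  "Spt m Smin Smax k = Smin + real k * (Smax - Smin) / (real m - 1)"

text \<open>Distributions on S, identified with the probability simplex in R^m:
  a distribution is a function F :: nat => real with F k = P[X = S_k] for k < m
  and F k = 0 for k >= m (so the product topology on nat => real restricts to the
  Euclidean topology of R^m on these functions).\<close>
definition Fdist :: "nat \<Rightarrow> (nat \<Rightarrow> real) set" where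
  "Fdist m = {F. (\<forall>k. 0 \<le> F k) \<and> (\<forall>k\<ge>m. F k = 0) \<and> (\<Sum>k<m. F k) = 1}"

definition mean :: "nat \<Rightarrow> real \<Rightarrow> real \<Rightarrow> (nat \<Rightarrow> real) \<Rightarrow> real" where
  "mean m Smin Smax F = (\<Sum>k<m. F k * Spt m Smin Smax k)"

text \<open>Samples of size n from S, identified with their sorted versions (sorted lists);
  x_(i) is xs ! (i - 1).\<close>
definition Samples :: "nat \<Rightarrow> nat \<Rightarrow> real \<Rightarrow> real \<Rightarrow> real list set" where
  "Samples m n Smin Smax =
     {xs. length xs = n \<and> sorted xs \<and> set xs \<subseteq> Spt m Smin Smax ` {0..<m}}"

text \<open>P_F[Omega']: probability that the sorted sample of n i.i.d. draws from F lies in Omega'.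
  Sum over all ordered index sequences of length n.\<close>
definition probF :: "nat \<Rightarrow> nat \<Rightarrow> real \<Rightarrow> real \<Rightarrow> (nat \<Rightarrow> real) \<Rightarrow> real list set \<Rightarrow> real" where
  "probF m n Smin Smax F \<Omega>' =
     (\<Sum>ks\<in>{ks. length ks = n \<and> set ks \<subseteq> {0..<m}}.
        if sort (map (Spt m Smin Smax) ks) \<in> \<Omega>' then (\<Prod>j<n. F (ks ! j)) else 0)"

definition Gset :: "nat \<Rightarrow> nat \<Rightarrow> real \<Rightarrow> real \<Rightarrow> real list set \<Rightarrow> real \<Rightarrow> (nat \<Rightarrow> real) set" where
  "Gset m n Smin Smax \<Omega>' \<alpha> = {F \<in> Fdist m. probF m n Smin Smax F \<Omega>' > \<alpha>}"

definition Fset :: "nat \<Rightarrow> nat \<Rightarrow> real \<Rightarrow> real \<Rightarrow> real list set \<Rightarrow> real \<Rightarrow> (nat \<Rightarrow> real) set" where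
  "Fset m n Smin Smax \<Omega>' \<alpha> = closure (Gset m n Smin Smax \<Omega>' \<alpha>)"

definition OmegaRi :: "nat \<Rightarrow> nat \<Rightarrow> real \<Rightarrow> real \<Rightarrow> real list \<Rightarrow> nat \<Rightarrow> real list set" where
  "OmegaRi m n Smin Smax x i = {y \<in> Samples m n Smin Smax. x ! (i - 1) \<le> y ! (i - 1)}"

text \<open>B*_{R_i}(x) = min {E[F] : F in F(Omega(x,R_i), alpha)} (as an infimum; it is attained).\<close>
definition Bstar :: "nat \<Rightarrow> nat \<Rightarrow> real \<Rightarrow> real \<Rightarrow> real \<Rightarrow> real list \<Rightarrow> nat \<Rightarrow> real" where
  "Bstar m n Smin Smax \<alpha> x i =
     Inf (mean m Smin Smax ` Fset m n Smin Smax (OmegaRi m n Smin Smax x i) \<alpha>)"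

definition FdistC :: "nat \<Rightarrow> real \<Rightarrow> real \<Rightarrow> real set \<Rightarrow> (nat \<Rightarrow> real) set" where
  "FdistC m Smin Smax C = {F \<in> Fdist m. \<forall>k<m. Spt m Smin Smax k \<notin> C \<longrightarrow> F k = 0}"

definition GsetC :: "nat \<Rightarrow> nat \<Rightarrow> real \<Rightarrow> real \<Rightarrow> real set \<Rightarrow> real list set \<Rightarrow> real \<Rightarrow> (nat \<Rightarrow> real) set" where
  "GsetC m n Smin Smax C \<Omega>' \<alpha> = FdistC m Smin Smax C \<inter> Gset m n Smin Smax \<Omega>' \<alpha>"

definition FsetC :: "nat \<Rightarrow> nat \<Rightarrow> real \<Rightarrow> real \<Rightarrow> real set \<Rightarrow> real list set \<Rightarrow> real \<Rightarrow> (nat \<Rightarrow> real) set" where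
  "FsetC m n Smin Smax C \<Omega>' \<alpha> = closure (GsetC m n Smin Smax C \<Omega>' \<alpha>)"

definition Cplus :: "nat \<Rightarrow> real \<Rightarrow> real \<Rightarrow> real set \<Rightarrow> real set" where
  "Cplus m Smin Smax C = C \<union> {Smin} \<union>
     {Spt m Smin Smax (j + 1) | j. Spt m Smin Smax j \<in> C \<and> j + 2 \<le> m}"

end

theory Submission
  imports Defs
begin
lemma Q_inv:
  fixes F G :: "nat \<Rightarrow> real" and \<phi> :: "nat \<Rightarrow> bool"
  assumes fin: "finite A"
    and hT: "(\<Sum>k\<in>A \<inter> {k. \<phi> k}. F k) = (\<Sum>k\<in>A \<inter> {k. \<phi> k}. G k)"
    and hF: "(\<Sum>k\<in>A \<inter> -{k. \<phi> k}. F k) = (\<Sum>k\<in>A \<inter> -{k. \<phi> k}. G k)"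
  shows "(\<Sum>ks\<in>{ks. length ks = n \<and> set ks \<subseteq> A}. if P (map \<phi> ks) then (\<Prod>j<n. F (ks!j)) else 0)
       = (\<Sum>ks\<in>{ks. length ks = n \<and> set ks \<subseteq> A}. if P (map \<phi> ks) then (\<Prod>j<n. G (ks!j)) else 0)"
proof (induction n arbitrary: P)
  case 0
  have e: "{ks. length ks = 0 \<and> set ks \<subseteq> A} = {[]}" by auto
  show ?case unfolding e by simp
next
  case (Suc n)
  define L where "L = {ks. length ks = n \<and> set ks \<subseteq> A}"
  have finL: "finite L" unfolding L_def using finite_lists_length_eq[OF fin, of n]
    by (simp add: conj_commute)
  have eqS: "{ks. length ks = Suc n \<and> set ks \<subseteq> A} = (\<lambda>(k,ks). k#ks) ` (A \<times> L)"
    unfolding L_def by (auto simp: length_Suc_conv)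
  have inj: "inj_on (\<lambda>(k,ks). k#ks) (A \<times> L)" by (auto simp: inj_on_def)
  define X where "X = (\<lambda>H b. (\<Sum>ks\<in>L. if P (b # map \<phi> ks) then (\<Prod>j<n. H (ks!j) :: real) else 0))"
  have key: "(\<Sum>ks\<in>{ks. length ks = Suc n \<and> set ks \<subseteq> A}. if P (map \<phi> ks) then (\<Prod>j<Suc n. H (ks!j)) else 0)
     = (\<Sum>k\<in>A \<inter> {k. \<phi> k}. H k) * X H True + (\<Sum>k\<in>A \<inter> -{k. \<phi> k}. H k) * X H False" for H
  proof -
    have "(\<Sum>ks\<in>{ks. length ks = Suc n \<and> set ks \<subseteq> A}. if P (map \<phi> ks) then (\<Prod>j<Suc n. H (ks!j)) else 0)
      = (\<Sum>(k,ks)\<in>A \<times> L. if P (\<phi> k # map \<phi> ks) then H k * (\<Prod>j<n. H (ks!j)) else 0)"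
      unfolding eqS sum.reindex[OF inj] by (intro sum.cong) (auto simp del: prod.lessThan_Suc simp add: prod.lessThan_Suc_shift)
    also have "\<dots> = (\<Sum>k\<in>A. H k * X H (\<phi> k))"
      unfolding sum.cartesian_product[symmetric] X_def
      by (simp add: sum_distrib_left if_distrib cong: if_cong)
    also have "\<dots> = (\<Sum>k\<in>A. if \<phi> k then H k * X H True else H k * X H False)"
      by (rule sum.cong) auto
    also have "\<dots> = (\<Sum>k\<in>A \<inter> {k. \<phi> k}. H k) * X H True + (\<Sum>k\<in>A \<inter> -{k. \<phi> k}. H k) * X H False"
      by (simp add: sum.If_cases fin sum_distrib_right)
    finally show ?thesis .
  qed
  have "X F b = X G b" for b
    using Suc.IH[of "\<lambda>bs. P (b # bs)"] unfolding X_def L_def by simp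
  then show ?case using key[of F] key[of G] hT hF by simp
qed

lemma sorted_nth_ge_iff:
  fixes zs :: "real list"
  assumes s: "sorted zs" and j: "j < length zs"
  shows "(c \<le> zs!j) \<longleftrightarrow> length (filter (\<lambda>z. z < c) zs) \<le> j"
proof
  assume h: "c \<le> zs!j"
  have "{l. l < length zs \<and> zs!l < c} \<subseteq> {..<j}"
  proof
    fix l assume "l \<in> {l. l < length zs \<and> zs!l < c}"
    hence l: "l < length zs" "zs!l < c" by auto
    show "l \<in> {..<j}"
    proof (rule ccontr)
      assume "l \<notin> {..<j}"
      hence "zs!j \<le> zs!l" using sorted_nth_mono[OF s _ l(1)] by auto
      thus False using h l by auto
    qed
  qed
  hence "card {l. l < length zs \<and> zs!l < c} \<le> j"
    using card_mono[of "{..<j}"] by fastforce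
  thus "length (filter (\<lambda>z. z < c) zs) \<le> j" by (simp add: length_filter_conv_card)
next
  assume h: "length (filter (\<lambda>z. z < c) zs) \<le> j"
  show "c \<le> zs!j"
  proof (rule ccontr)
    assume "\<not> c \<le> zs!j"
    hence "{..j} \<subseteq> {l. l < length zs \<and> zs!l < c}"
      using sorted_nth_mono[OF s _ j] j by force
    hence "card {..j} \<le> card {l. l < length zs \<and> zs!l < c}"
      by (intro card_mono) auto
    thus False using h by (simp add: length_filter_conv_card)
  qed
qed

theorem theorem5:
  fixes m n :: nat and Smin Smax \<alpha> :: real and x :: "real list" and i :: nat
  assumes "m \<ge> 2" and "n \<ge> 1" and "Smin < Smax"
    and "x \<in> Samples m n Smin Smax"
    and "0 \<le> \<alpha>" and "\<alpha> < 1"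
    and "1 \<le> i" and "i \<le> n"
  defines "C \<equiv> {x ! (i - 1)}"
  shows "Bstar m n Smin Smax \<alpha> x i =
           Inf (mean m Smin Smax ` FsetC m n Smin Smax (Cplus m Smin Smax C)
                  (OmegaRi m n Smin Smax x i) \<alpha>)
       \<and> Bstar m n Smin Smax \<alpha> x i \<in>
           mean m Smin Smax ` FsetC m n Smin Smax (Cplus m Smin Smax C)
                  (OmegaRi m n Smin Smax x i) \<alpha>"
proof -
  note a = assms
  define S where "S = Spt m Smin Smax"
  define \<Omega> where "\<Omega> = OmegaRi m n Smin Smax x i"
  define L where "L = {ks::nat list. length ks = n \<and> set ks \<subseteq> {0..<m}}"
  have m1: "real m - 1 > 0" using a(1) by simp
  have Smono: "S a < S b \<longleftrightarrow> a < b" for a b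
  proof -
    have "S a < S b \<longleftrightarrow> real a * (Smax - Smin) / (real m - 1) < real b * (Smax - Smin) / (real m - 1)"
      by (simp add: S_def Spt_def)
    also have "\<dots> \<longleftrightarrow> real a * (Smax - Smin) < real b * (Smax - Smin)"
      using m1 by (simp add: divide_less_cancel)
    also have "\<dots> \<longleftrightarrow> a < b" using a(3) by simp
    finally show ?thesis .
  qed
  have Smono_le: "S a \<le> S b \<longleftrightarrow> a \<le> b" for a b using Smono[of b a] by linarith
  have S0: "S 0 = Smin" by (simp add: S_def Spt_def)
  have lenx: "length x = n" and setx: "set x \<subseteq> S ` {0..<m}"
    using a(4) by (auto simp: Samples_def S_def)
  have "x ! (i - 1) \<in> set x" using lenx a(7,8) by simp
  then obtain kc where kc: "kc < m" "x ! (i - 1) = S kc" using setx by auto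
  have cond: "(sort (map S ks) \<in> \<Omega>) \<longleftrightarrow> length (filter (\<lambda>k. k < kc) ks) \<le> i - 1"
    if ks: "ks \<in> L" for ks
  proof -
    have inS: "sort (map S ks) \<in> Samples m n Smin Smax"
      using ks by (auto simp: Samples_def L_def S_def)
    have "(sort (map S ks) \<in> \<Omega>) \<longleftrightarrow> S kc \<le> sort (map S ks) ! (i - 1)"
      using inS kc by (simp add: \<Omega>_def OmegaRi_def)
    also have "\<dots> \<longleftrightarrow> length (filter (\<lambda>z. z < S kc) (sort (map S ks))) \<le> i - 1"
      by (rule sorted_nth_ge_iff) (use ks a(7,8) in \<open>auto simp: L_def\<close>)
    also have "length (filter (\<lambda>z. z < S kc) (sort (map S ks))) = length (filter (\<lambda>k. k < kc) ks)"
    proof -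
      have "(\<lambda>z. z < S kc) \<circ> S = (\<lambda>k. k < kc)" using Smono by (auto simp: fun_eq_iff)
      thus ?thesis by (simp add: filter_sort filter_map)
    qed
    finally show ?thesis .
  qed
  define P where "P = (\<lambda>bs::bool list. length (filter id bs) \<le> i - 1)"
  define \<phi> where "\<phi> = (\<lambda>k::nat. k < kc)"
  have pQ: "probF m n Smin Smax G \<Omega> =
      (\<Sum>ks\<in>L. if P (map \<phi> ks) then (\<Prod>j<n. G (ks!j)) else 0)" for G
    unfolding probF_def L_def[symmetric] S_def[symmetric]
  proof (rule sum.cong)
    fix ks assume "ks \<in> L"
    hence "(sort (map S ks) \<in> \<Omega>) = P (map \<phi> ks)"
      using cond by (simp add: P_def \<phi>_def filter_map comp_def)
    thus "(if sort (map S ks) \<in> \<Omega> then \<Prod>j<n. G (ks ! j) else 0) =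
         (if P (map \<phi> ks) then \<Prod>j<n. G (ks ! j) else 0)" by simp
  qed simp

  define T where "T = (\<lambda>q::real. \<lambda>k::nat. (if k = 0 then q else 0) + (if k = kc then 1 - q else 0))"
  define low where "low = (\<lambda>G::nat\<Rightarrow>real. \<Sum>k\<in>{0..<m} \<inter> {k. \<phi> k}. G k)"
  define hi where "hi = (\<lambda>G::nat\<Rightarrow>real. \<Sum>k\<in>{0..<m} \<inter> -{k. \<phi> k}. G k)"
  have setlo: "{0..<m} \<inter> {k. \<phi> k} = {0..<kc}" using kc by (auto simp: \<phi>_def)
  have sethi: "{0..<m} \<inter> -{k. \<phi> k} = {kc..<m}" using kc by (auto simp: \<phi>_def)
  have lowhi: "low G + hi G = 1" "low G \<ge> 0" "hi G \<ge> 0" if "G \<in> Fdist m" for G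
  proof -
    have "low G + hi G = (\<Sum>k\<in>{0..<m}. G k)"
      unfolding low_def hi_def using sum.If_cases[of "{0..<m}" \<phi> G G] by simp
    thus "low G + hi G = 1" using that by (simp add: Fdist_def atLeast0LessThan)
    show "low G \<ge> 0" "hi G \<ge> 0" using that unfolding low_def hi_def Fdist_def
      by (auto intro: sum_nonneg)
  qed
  have lowT: "low (T (low G)) = low G" for G
    using kc by (cases "kc = 0") (simp_all add: low_def setlo T_def sum.distrib)
  have hiT: "hi (T (low G)) = hi G" if "G \<in> Fdist m" for G
  proof (cases "kc = 0")
    case True
    hence "low G = 0" by (simp add: low_def setlo)
    thus ?thesis using lowhi[OF that] True kc by (simp add: hi_def sethi T_def sum.distrib)
  next
    case False
    thus ?thesis using lowhi[OF that] kc by (simp add: hi_def sethi T_def sum.distrib)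
  qed
  have probT: "probF m n Smin Smax G \<Omega> = probF m n Smin Smax (T (low G)) \<Omega>" if "G \<in> Fdist m" for G
    unfolding pQ L_def
    by (rule Q_inv) (use lowT[of G] hiT[OF that] in \<open>simp_all add: low_def hi_def\<close>)

  have T0: "T 0 = (\<lambda>k. if k = kc then 1 else 0)" by (auto simp: T_def fun_eq_iff)
  have g0: "probF m n Smin Smax (T 0) \<Omega> = 1"
  proof -
    have "probF m n Smin Smax (T 0) \<Omega> = (\<Sum>ks\<in>L. if ks = replicate n kc then 1 else 0)"
      unfolding pQ
    proof (rule sum.cong)
      fix ks assume ks: "ks \<in> L"
      show "(if P (map \<phi> ks) then \<Prod>j<n. T 0 (ks ! j) else 0) = (if ks = replicate n kc then 1 else 0)"
      proof (cases "ks = replicate n kc")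
        case True
        thus ?thesis by (simp add: P_def \<phi>_def T0)
      next
        case False
        then obtain j where j: "j < n" "ks ! j \<noteq> kc" using ks
          by (auto simp: L_def list_eq_iff_nth_eq)
        hence "(\<Prod>j<n. T 0 (ks ! j)) = 0" by (subst prod_zero_iff) (auto simp: T0)
        thus ?thesis using False by simp
      qed
    qed simp
    also have "\<dots> = 1"
    proof -
      have "replicate n kc \<in> L" using kc by (auto simp: L_def)
      moreover have "finite L" unfolding L_def
        using finite_lists_length_eq[of "{0..<m}" n] by (simp add: conj_commute)
      ultimately show ?thesis by (simp add: sum.delta)
    qed
    finally show ?thesis .
  qed
  have TF: "T q \<in> Fdist m" if "q \<in> {0..1}" for q
    using that kc by (auto simp: Fdist_def T_def sum.distrib)
  have TC: "T q \<in> FdistC m Smin Smax (Cplus m Smin Smax C)" if "q \<in> {0..1}" for q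
    using TF[OF that] kc S0 unfolding FdistC_def Cplus_def C_def S_def[symmetric]
    by (auto simp: T_def)
  have ifm: "(if c then a else 0) * b = (if c then a * b else (0::real))" for c a b by simp
  have meanT: "mean m Smin Smax (T q) = q * Smin + (1 - q) * S kc" for q
    using kc S0 by (simp add: mean_def T_def S_def[symmetric] sum.distrib distrib_right ifm)
  have mean_lb: "mean m Smin Smax G \<ge> low G * Smin + hi G * S kc" if "G \<in> Fdist m" for G
  proof -
    have "low G * Smin + hi G * S kc = (\<Sum>k\<in>{0..<m}. if \<phi> k then G k * Smin else G k * S kc)"
      by (simp add: sum.If_cases low_def hi_def sum_distrib_right)
    also have "\<dots> \<le> (\<Sum>k\<in>{0..<m}. G k * S k)"
    proof (rule sum_mono)
      fix k assume "k \<in> {0..<m}"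
      have "G k \<ge> 0" using that by (simp add: Fdist_def)
      moreover have "Smin \<le> S k" using Smono_le[of 0 k] S0 by simp
      moreover have "\<not> \<phi> k \<Longrightarrow> S kc \<le> S k" using Smono_le by (simp add: \<phi>_def)
      ultimately show "(if \<phi> k then G k * Smin else G k * S kc) \<le> G k * S k"
        by (auto intro: mult_left_mono)
    qed
    finally show ?thesis by (simp add: mean_def S_def atLeast0LessThan)
  qed

  define g where "g = (\<lambda>q. probF m n Smin Smax (T q) \<Omega>)"
  define A where "A = {q \<in> {0..1}. \<alpha> < g q}"
  define qs where "qs = Sup A"
  have A0: "0 \<in> A" using g0 a(6) by (simp add: A_def g_def)
  have Abdd: "bdd_above A" by (rule bdd_aboveI[of _ 1]) (auto simp: A_def)
  have qscl: "qs \<in> closure A" unfolding qs_def using A0 Abdd by (intro closure_contains_Sup) auto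
  have "closure A \<subseteq> {0..1}" by (rule closure_minimal) (auto simp: A_def)
  hence qs01: "qs \<in> {0..1}" using qscl by auto
  define v where "v = qs * Smin + (1 - qs) * S kc"
  have Skc: "Smin \<le> S kc" using Smono_le[of 0 kc] S0 by simp
  have Glb: "v \<le> mean m Smin Smax G" if "G \<in> Gset m n Smin Smax \<Omega> \<alpha>" for G
  proof -
    have G: "G \<in> Fdist m" "\<alpha> < probF m n Smin Smax G \<Omega>" using that by (auto simp: Gset_def)
    have "low G \<in> A" using G lowhi[OF G(1)] probT[OF G(1)] by (auto simp: A_def g_def)
    hence le: "low G \<le> qs" unfolding qs_def using Abdd by (rule cSup_upper)
    have "(qs - low G) * (S kc - Smin) \<ge> 0" using le Skc by simp
    moreover have "hi G = 1 - low G" using lowhi(1)[OF G(1)] by simp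
    ultimately have "v \<le> low G * Smin + hi G * S kc"
    proof -
      assume p: "(qs - low G) * (S kc - Smin) \<ge> 0" and h: "hi G = 1 - low G"
      have "low G * Smin + hi G * S kc - v = (qs - low G) * (S kc - Smin)"
        unfolding h v_def by (simp add: algebra_simps)
      thus ?thesis using p by linarith
    qed
    also have "\<dots> \<le> mean m Smin Smax G" by (rule mean_lb[OF G(1)])
    finally show ?thesis .
  qed
  have contmean: "continuous_on UNIV (mean m Smin Smax)"
    unfolding mean_def by (intro continuous_intros continuous_on_product_coordinates)
  have Flb: "Fset m n Smin Smax \<Omega> \<alpha> \<subseteq> {G. v \<le> mean m Smin Smax G}"
    unfolding Fset_def
  proof (rule closure_minimal)
    show "Gset m n Smin Smax \<Omega> \<alpha> \<subseteq> {G. v \<le> mean m Smin Smax G}" using Glb by auto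
    show "closed {G. v \<le> mean m Smin Smax G}"
      by (rule closed_Collect_le) (auto intro: continuous_intros contmean)
  qed
  have contT: "continuous_on X T" for X
  proof (rule continuous_on_coordinatewise_then_product)
    fix k
    show "continuous_on X (\<lambda>q. T q k)"
      by (cases "k = 0"; cases "k = kc") (auto simp: T_def intro!: continuous_intros)
  qed
  have "T ` A \<subseteq> GsetC m n Smin Smax (Cplus m Smin Smax C) \<Omega> \<alpha>"
    using TF TC by (auto simp: A_def g_def GsetC_def Gset_def)
  hence "T ` closure A \<subseteq> FsetC m n Smin Smax (Cplus m Smin Smax C) \<Omega> \<alpha>"
    unfolding FsetC_def by (intro image_closure_subset contT) (use closure_subset in blast)+
  hence F0C: "T qs \<in> FsetC m n Smin Smax (Cplus m Smin Smax C) \<Omega> \<alpha>" using qscl by auto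
  have CsubF: "FsetC m n Smin Smax (Cplus m Smin Smax C) \<Omega> \<alpha> \<subseteq> Fset m n Smin Smax \<Omega> \<alpha>"
    unfolding FsetC_def Fset_def GsetC_def by (intro closure_mono) auto
  have mv: "mean m Smin Smax (T qs) = v" by (simp add: meanT v_def)
  have I1: "Inf (mean m Smin Smax ` Fset m n Smin Smax \<Omega> \<alpha>) = v"
    by (rule cInf_eq_minimum) (use F0C CsubF mv Flb in auto)
  have I2: "Inf (mean m Smin Smax ` FsetC m n Smin Smax (Cplus m Smin Smax C) \<Omega> \<alpha>) = v"
    by (rule cInf_eq_minimum) (use F0C CsubF mv Flb in auto)
  show ?thesis
    using I1 I2 F0C mv unfolding Bstar_def \<Omega>_def[symmetric] by force
qed
end
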